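(* Let $\sigma>0$ and define $S_\sigma f(x)=\int_{\{y\in\mathbb{R}^d:(x,y)\in L_\sigma\}}\frac{1+|x|}{|x-y|^{d-1}}f(y)\,dy$, $x\in\mathbb{R}^d$. Then $S_\sigma$ is bounded from $L^p(\mathbb{R}^d,dx)$ into itself and from $L^p(\mathbb{R}^d,\gamma_{\infty,1})$ into itself, for every $1\le p\le\infty$.
   Context: $d\ge 1$. $d\gamma_{\infty,1}(x)=\pi^{-d/2}e^{-|x|^2}dx$. For $\sigma>0$, $L_\sigma=\{(x,y)\in\mathbb{R}^d\times\mathbb{R}^d:\ |x-y|\le\sigma\min\{1,|x+y|^{-1}\}\}$ (the $\sigma$-local region). *)

theory Defs
  imports "HOL-Analysis.Analysis"
begin

definition gauss_measure :: "'a::euclidean_space measure" where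
  "gauss_measure = density lborel
     (\<lambda>x. ennreal (pi powr (- real DIM('a) / 2) * exp (- (norm x)\<^sup>2)))"

text \<open>The sigma-local region: |x-y| <= sigma * min{1, |x+y|^(-1)},
  where |x+y|^(-1) = +infinity when x+y = 0.\<close>
definition local_region :: "real \<Rightarrow> ('a::euclidean_space \<times> 'a) set" where
  "local_region \<sigma> = {(x, y). norm (x - y) \<le> \<sigma> \<and> norm (x - y) * norm (x + y) \<le> \<sigma>}"

definition S_kernel :: "real \<Rightarrow> 'a::euclidean_space \<Rightarrow> 'a \<Rightarrow> real" where
  "S_kernel \<sigma> x y = indicator (local_region \<sigma>) (x, y) *
      ((1 + norm x) / norm (x - y) ^ (DIM('a) - 1))"

definition S_op :: "real \<Rightarrow> ('a::euclidean_space \<Rightarrow> real) \<Rightarrow> 'a \<Rightarrow> real" where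
  "S_op \<sigma> f x = (\<integral>y. S_kernel \<sigma> x y * f y \<partial>lborel)"

definition S_bounded_Lp :: "'a::euclidean_space measure \<Rightarrow> real \<Rightarrow> real \<Rightarrow> bool" where
  "S_bounded_Lp M p \<sigma> \<longleftrightarrow> (\<exists>C\<ge>0. \<forall>f \<in> borel_measurable M.
     (\<integral>\<^sup>+ x. ennreal (\<bar>f x\<bar> powr p) \<partial>M) < \<infinity> \<longrightarrow>
       (AE x in M. integrable lborel (\<lambda>y. S_kernel \<sigma> x y * f y)) \<and>
       S_op \<sigma> f \<in> borel_measurable M \<and>
       (\<integral>\<^sup>+ x. ennreal (\<bar>S_op \<sigma> f x\<bar> powr p) \<partial>M)
          \<le> ennreal C * (\<integral>\<^sup>+ x. ennreal (\<bar>f x\<bar> powr p) \<partial>M))"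

definition S_bounded_Linf :: "'a::euclidean_space measure \<Rightarrow> real \<Rightarrow> bool" where
  "S_bounded_Linf M \<sigma> \<longleftrightarrow> (\<exists>C\<ge>0. \<forall>f \<in> borel_measurable M. \<forall>B.
     (AE x in M. \<bar>f x\<bar> \<le> B) \<longrightarrow>
       (AE x in M. integrable lborel (\<lambda>y. S_kernel \<sigma> x y * f y)) \<and>
       S_op \<sigma> f \<in> borel_measurable M \<and>
       (AE x in M. \<bar>S_op \<sigma> f x\<bar> \<le> C * B))"

end

theory Submission
  imports Defs
begin


lemma local_region_closed: "closed (local_region \<sigma> :: ('a::euclidean_space \<times> 'a) set)"
proof -
  have "local_region \<sigma> = {p. norm (fst p - snd p) \<le> \<sigma>} \<inter> {p :: 'a \<times> 'a. norm (fst p - snd p) * norm (fst p + snd p) \<le> \<sigma>}"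
    by (auto simp: local_region_def)
  moreover have "closed {p. norm (fst p - snd p) \<le> \<sigma>}"
    by (intro closed_Collect_le continuous_intros)
  moreover have "closed {p :: 'a \<times> 'a. norm (fst p - snd p) * norm (fst p + snd p) \<le> \<sigma>}"
    by (intro closed_Collect_le continuous_intros)
  ultimately show ?thesis by auto
qed

lemma S_kernel_meas[measurable]: "case_prod (S_kernel \<sigma>) \<in> borel_measurable (lborel \<Otimes>\<^sub>M (lborel :: 'a::euclidean_space measure))"
proof -
  have "local_region \<sigma> \<in> sets (borel :: ('a \<times> 'a) measure)"
    by (simp add: local_region_closed borel_closed)
  then have [measurable]: "local_region \<sigma> \<in> sets (lborel \<Otimes>\<^sub>M (lborel :: 'a measure))"
    by (metis lborel_prod sets_lborel)
  show ?thesis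
    unfolding S_kernel_def case_prod_beta' by measurable
qed


lemma radial_meas[measurable]: "(\<lambda>x::'a::euclidean_space. ennreal (indicator (cball 0 r) x / norm x ^ k)) \<in> borel_measurable lborel"
proof -
  have [measurable]: "cball (0::'a) r \<in> sets borel" by simp
  have [measurable]: "(\<lambda>x::'a. norm x ^ k) \<in> borel_measurable lborel" by measurable
  show ?thesis by measurable
qed

lemma dyadic_shell:
  fixes t r :: real
  assumes "0 < t" "t \<le> r"
  obtains k :: nat where "r / 2^(k+1) < t" "t \<le> r / 2^k"
proof -
  obtain n :: nat where n: "r / t < 2^n" using real_arch_pow[of 2 "r/t"] by auto
  define n0 where "n0 = (LEAST n::nat. r / t < 2^n)"
  have n0: "r / t < 2^n0" unfolding n0_def by (rule LeastI[of _ n], rule n)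
  have ge1: "1 \<le> r / t" using assms by simp
  have "n0 \<noteq> 0"
  proof
    assume "n0 = 0" then show False using n0 ge1 by simp
  qed
  then obtain k where k: "n0 = Suc k" by (cases n0) auto
  have "\<not> r / t < 2^k" using not_less_Least[of k "\<lambda>n. r / t < 2^n"] k unfolding n0_def by auto
  then have "2^k \<le> r / t" by simp
  then have 1: "t \<le> r / 2^k" using assms by (simp add: field_simps)
  have "r / t < 2^(k+1)" using n0 k by simp
  then have 2: "r / 2^(k+1) < t" using assms by (simp add: field_simps)
  show ?thesis using 1 2 that by blast
qed

lemma pointwise_dyadic:
  fixes z :: "'a::euclidean_space"
  assumes "r > 0" "z \<noteq> 0"
  shows "ennreal (indicator (cball 0 r) z / norm z ^ (DIM('a)-1))
     \<le> (\<Sum>k. ennreal ((2^(k+1)/r)^(DIM('a)-1)) * indicator (cball 0 (r/2^k)) z)"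
proof (cases "norm z \<le> r")
  case False
  then show ?thesis by (simp add: indicator_def)
next
  case True
  have zp: "0 < norm z" using assms by simp
  obtain k :: nat where k1: "r / 2^(k+1) < norm z" and k2: "norm z \<le> r / 2^k"
    using dyadic_shell[OF zp True] by blast
  have "1 / norm z \<le> 2^(k+1)/r" using k1 zp assms by (simp add: field_simps)
  then have "(1 / norm z)^(DIM('a)-1) \<le> (2^(k+1)/r)^(DIM('a)-1)"
    using zp by (intro power_mono) auto
  then have "indicator (cball 0 r) z / norm z ^ (DIM('a)-1) \<le> (2^(k+1)/r)^(DIM('a)-1)"
    using True by (simp add: indicator_def dist_norm power_one_over)
  then have "ennreal (indicator (cball 0 r) z / norm z ^ (DIM('a)-1))
      \<le> ennreal ((2^(k+1)/r)^(DIM('a)-1)) * indicator (cball 0 (r/2^k)) z"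
    using k2 by (simp add: indicator_def dist_norm ennreal_leI)
  also have "\<dots> \<le> (\<Sum>k. ennreal ((2^(k+1)/r)^(DIM('a)-1)) * indicator (cball 0 (r/2^k)) z)"
  proof -
    define F where "F = (\<lambda>k::nat. ennreal ((2^(k+1)/r)^(DIM('a)-1)) * indicator (cball (0::'a) (r/2^k)) z)"
    have "(\<Sum>i\<in>{k}. F i) \<le> suminf F" by (rule sum_le_suminf) (auto intro: summableI)
    then have "F k \<le> suminf F" by simp
    then show ?thesis unfolding F_def .
  qed
  finally show ?thesis .
qed

lemma cball_measure_bound:
  assumes "\<rho> > 0"
  shows "emeasure lborel (cball (0::'a::euclidean_space) \<rho>) \<le> ennreal ((2*\<rho>) ^ DIM('a)) * emeasure lborel (ball (0::'a) 1)"
proof -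
  have "emeasure lborel (cball (0::'a) \<rho>) \<le> emeasure lborel (ball (0::'a) (2*\<rho>))"
    using assms by (intro emeasure_mono) (auto simp: cball_def ball_def)
  also have "\<dots> = emeasure lebesgue (ball (0::'a) (2*\<rho>))" by simp
  also have "\<dots> = ennreal ((2*\<rho>) ^ DIM('a)) * emeasure lebesgue (ball (0::'a) 1)"
    using assms by (intro emeasure_lebesgue_ball_conv_unit_ball) auto
  finally show ?thesis by simp
qed

lemma radial_bound:
  assumes "r > 0"
  shows "(\<integral>\<^sup>+ z. ennreal (indicator (cball (0::'a::euclidean_space) r) z / norm z ^ (DIM('a)-1)) \<partial>lborel)
     \<le> ennreal (4^DIM('a) * r) * emeasure lborel (ball (0::'a) 1)"
proof -
  let ?D = "DIM('a)"
  define m where "m = ?D - 1"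
  have Dm: "?D = Suc m" unfolding m_def using DIM_positive[where 'a='a] by linarith
  define V where "V = emeasure lborel (ball (0::'a) 1)"
  have "(\<integral>\<^sup>+ z. ennreal (indicator (cball (0::'a) r) z / norm z ^ (?D-1)) \<partial>lborel)
     \<le> (\<integral>\<^sup>+ z. (\<Sum>k. ennreal ((2^(k+1)/r)^(?D-1)) * indicator (cball (0::'a) (r/2^k)) z) \<partial>lborel)"
    apply (rule nn_integral_mono_AE)
    apply (rule eventually_mono[OF AE_lborel_singleton[of "0::'a"]])
    apply (rule pointwise_dyadic[OF assms])
    apply assumption
    done
  also have "\<dots> = (\<Sum>k. \<integral>\<^sup>+ z. ennreal ((2^(k+1)/r)^(?D-1)) * indicator (cball (0::'a) (r/2^k)) z \<partial>lborel)"
    by (intro nn_integral_suminf) (auto intro!: borel_measurable_times_ennreal borel_measurable_indicator)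
  also have "\<dots> = (\<Sum>k. ennreal ((2^(k+1)/r)^(?D-1)) * emeasure lborel (cball (0::'a) (r/2^k)))"
    by (intro suminf_cong nn_integral_cmult_indicator) auto
  also have "\<dots> \<le> (\<Sum>k. ennreal (4^m * 2 * r * (1/2)^k) * V)"
  proof (intro suminf_le summableI)
    fix k :: nat
    have "ennreal ((2^(k+1)/r)^(?D-1)) * emeasure lborel (cball (0::'a) (r/2^k))
        \<le> ennreal ((2^(k+1)/r)^(?D-1)) * (ennreal ((2*(r/2^k)) ^ ?D) * V)"
      unfolding V_def using assms by (intro mult_left_mono cball_measure_bound) auto
    also have "\<dots> = ennreal ((2^(k+1)/r)^(?D-1) * (2*(r/2^k)) ^ ?D) * V"
      using assms by (simp add: ennreal_mult' mult.assoc)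
    also have "(2^(k+1)/r)^(?D-1) * (2*(r/2^k)) ^ ?D = 4^m * 2 * r * (1/2)^k"
    proof -
      have "(2^(k+1)/r)^(?D-1) * (2*(r/2^k)) ^ ?D = ((2^(k+1)/r) * (2*(r/2^k)))^m * (2*(r/2^k))"
        unfolding Dm diff_Suc_1 power_mult_distrib power_Suc by (simp only: mult_ac)
      also have "(2^(k+1)/r) * (2*(r/2^k)) = (4::real)"
        using assms by (simp add: field_simps)
      finally show ?thesis by (simp add: field_simps power_divide)
    qed
    finally show "ennreal ((2^(k+1)/r)^(?D-1)) * emeasure lborel (cball (0::'a) (r/2^k)) \<le> ennreal (4^m * 2 * r * (1/2)^k) * V" .
  qed
  also have "\<dots> = (\<Sum>k. ennreal (4^m * 2 * r * (1/2)^k)) * V"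
    by (simp add: ennreal_suminf_multc)
  also have "(\<Sum>k. ennreal (4^m * 2 * r * (1/2)^k)) = ennreal (4^m * 2 * r * 2)"
  proof (rule suminf_ennreal_eq)
    show "(\<lambda>k. 4^m * 2 * r * (1/2)^k) sums (4^m * 2 * r * 2)"
      using sums_mult[OF geometric_sums[of "1/2::real"], of "4^m*2*r"] by simp
  qed (use assms in auto)
  also have "4^m * 2 * r * 2 = (4::real)^?D * r" unfolding Dm by simp
  finally show ?thesis unfolding V_def .
qed



lemma S_kernel_nonneg: "0 \<le> S_kernel \<sigma> x y"
  unfolding S_kernel_def by (auto intro!: mult_nonneg_nonneg divide_nonneg_nonneg)

lemma kernel_shift_bound:
  fixes x z :: "'a::euclidean_space"
  assumes "\<sigma> > 0"
  defines "\<rho> \<equiv> (if norm x \<le> \<sigma> then \<sigma> else \<sigma> / norm x)"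
  shows "S_kernel \<sigma> x (x + z) \<le> (1 + norm x) * (indicator (cball 0 \<rho>) z / norm z ^ (DIM('a)-1))"
proof (cases "(x, x + z) \<in> local_region \<sigma>")
  case False
  then show ?thesis by (simp add: S_kernel_def)
next
  case True
  then have z1: "norm z \<le> \<sigma>" and z2: "norm z * norm (2 *\<^sub>R x + z) \<le> \<sigma>"
    by (auto simp: local_region_def scaleR_2 add.assoc)
  have "norm z \<le> \<rho>"
  proof (cases "norm x \<le> \<sigma>")
    case True then show ?thesis using z1 by (simp add: \<rho>_def)
  next
    case False
    have "norm (2 *\<^sub>R x) \<le> norm (2 *\<^sub>R x + z) + norm z"
      by (metis add_diff_cancel_right' norm_triangle_ineq4)
    then have "norm x \<le> norm (2 *\<^sub>R x + z)" using z1 False by simp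
    then have "norm z * norm x \<le> \<sigma>" using z2
      by (meson mult_left_mono norm_ge_zero order_trans)
    have xp: "norm x > 0" using False assms by auto
    then show ?thesis using \<open>norm z * norm x \<le> \<sigma>\<close> False by (simp add: \<rho>_def le_divide_eq)
  qed
  then show ?thesis using True
    by (simp add: S_kernel_def dist_norm)
qed

lemma row_bound:
  fixes x :: "'a::euclidean_space"
  assumes "\<sigma> > 0"
  shows "(\<integral>\<^sup>+ y. ennreal (S_kernel \<sigma> x y) \<partial>lborel)
      \<le> ennreal (4^DIM('a) * (1 + \<sigma> + \<sigma>^2)) * emeasure lborel (ball (0::'a) 1)"
proof -
  define \<rho> where "\<rho> = (if norm x \<le> \<sigma> then \<sigma> else \<sigma> / norm x)"
  have \<rho>pos: "\<rho> > 0" using assms by (cases "norm x \<le> \<sigma>") (auto simp: \<rho>_def intro!: divide_pos_pos)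
  have \<rho>b: "(1 + norm x) * \<rho> \<le> 1 + \<sigma> + \<sigma>^2"
  proof (cases "norm x \<le> \<sigma>")
    case True
    then have "(1 + norm x) * \<sigma> \<le> (1 + \<sigma>) * \<sigma>" using assms by (intro mult_right_mono) auto
    then show ?thesis using True by (simp add: \<rho>_def power2_eq_square algebra_simps)
  next
    case False
    then have xp: "norm x > 0" using assms by auto
    have "(1 + norm x) * (\<sigma> / norm x) = \<sigma> / norm x + \<sigma>" using xp by (simp add: field_simps)
    also have "\<sigma> / norm x \<le> 1" using False xp by simp
    finally have "(1 + norm x) * (\<sigma> / norm x) \<le> 1 + \<sigma>" by simp
    moreover have "0 \<le> \<sigma>^2" by simp
    ultimately show ?thesis using False by (simp only: \<rho>_def if_False)
  qed
  have "(\<integral>\<^sup>+ y. ennreal (S_kernel \<sigma> x y) \<partial>lborel)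
      = (\<integral>\<^sup>+ y. ennreal (S_kernel \<sigma> x y) \<partial>distr lborel borel ((+) x))"
    by (simp add: lborel_distr_plus)
  also have "\<dots> = (\<integral>\<^sup>+ z. ennreal (S_kernel \<sigma> x (x + z)) \<partial>lborel)"
  proof -
    have "(\<lambda>y. ennreal (S_kernel \<sigma> x y)) \<in> borel_measurable lborel"
      using measurable_Pair2[OF S_kernel_meas[of \<sigma>], of x] by simp
    then have "(\<lambda>y. ennreal (S_kernel \<sigma> x y)) \<in> borel_measurable borel" by simp
    then show ?thesis by (intro nn_integral_distr) auto
  qed
  also have "\<dots> \<le> (\<integral>\<^sup>+ z. ennreal (1 + norm x) * ennreal (indicator (cball (0::'a) \<rho>) z / norm z ^ (DIM('a)-1)) \<partial>lborel)"
  proof (rule nn_integral_mono)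
    fix z :: 'a
    show "ennreal (S_kernel \<sigma> x (x + z)) \<le> ennreal (1 + norm x) * ennreal (indicator (cball (0::'a) \<rho>) z / norm z ^ (DIM('a)-1))"
    proof -
      have "S_kernel \<sigma> x (x + z) \<le> (1 + norm x) * (indicator (cball (0::'a) \<rho>) z / norm z ^ (DIM('a)-1))"
        using kernel_shift_bound[OF assms, of x z] unfolding \<rho>_def .
      then show ?thesis by (subst ennreal_mult'[symmetric]) (auto intro!: ennreal_leI)
    qed
  qed
  also have "\<dots> = ennreal (1 + norm x) * (\<integral>\<^sup>+ z. ennreal (indicator (cball (0::'a) \<rho>) z / norm z ^ (DIM('a)-1)) \<partial>lborel)"
    by (rule nn_integral_cmult) (rule radial_meas)
  also have "\<dots> \<le> ennreal (1 + norm x) * (ennreal (4^DIM('a) * \<rho>) * emeasure lborel (ball (0::'a) 1))"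
    by (intro mult_left_mono radial_bound \<rho>pos) auto
  also have "\<dots> = ennreal (4^DIM('a) * ((1 + norm x) * \<rho>)) * emeasure lborel (ball (0::'a) 1)"
    using \<rho>pos by (simp add: ennreal_mult' mult_ac)
  also have "\<dots> \<le> ennreal (4^DIM('a) * (1 + \<sigma> + \<sigma>^2)) * emeasure lborel (ball (0::'a) 1)"
    by (intro mult_right_mono ennreal_leI) (use \<rho>b in auto)
  finally show ?thesis .
qed

lemma kernel_swap: 
  assumes "\<sigma> > 0"
  shows "S_kernel \<sigma> x y \<le> (1 + \<sigma>) * S_kernel \<sigma> y x"
proof (cases "(x, y) \<in> local_region \<sigma>")
  case False
  then have "(y, x) \<notin> local_region \<sigma>"
    by (auto simp: local_region_def norm_minus_commute add.commute)
  then show ?thesis using False by (simp add: S_kernel_def)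
next
  case True
  then have yx: "(y, x) \<in> local_region \<sigma>"
    by (auto simp: local_region_def norm_minus_commute add.commute)
  have "norm (x - y) \<le> \<sigma>" using True by (simp add: local_region_def)
  then have "norm x \<le> norm y + \<sigma>" using norm_triangle_ineq2[of x y] by linarith
  then have "1 + norm x \<le> (1 + \<sigma>) * (1 + norm y)" using assms
    by (simp add: algebra_simps) (smt (verit) mult_nonneg_nonneg norm_ge_zero)
  then have "(1 + norm x) / norm (x - y) ^ (DIM('a) - 1) \<le> (1 + \<sigma>) * (1 + norm y) / norm (y - x) ^ (DIM('a) - 1)"
    by (simp add: norm_minus_commute divide_right_mono)
  then show ?thesis using True yx by (simp add: S_kernel_def)
qed

lemma col_bound:
  fixes y :: "'a::euclidean_space"
  assumes "\<sigma> > 0"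
  shows "(\<integral>\<^sup>+ x. ennreal (S_kernel \<sigma> x y) \<partial>lborel)
      \<le> ennreal ((1 + \<sigma>) * (4^DIM('a) * (1 + \<sigma> + \<sigma>^2))) * emeasure lborel (ball (0::'a) 1)"
proof -
  have "(\<integral>\<^sup>+ x. ennreal (S_kernel \<sigma> x y) \<partial>lborel) \<le> (\<integral>\<^sup>+ x. ennreal (1 + \<sigma>) * ennreal (S_kernel \<sigma> y x) \<partial>lborel)"
  proof (rule nn_integral_mono)
    fix x
    show "ennreal (S_kernel \<sigma> x y) \<le> ennreal (1 + \<sigma>) * ennreal (S_kernel \<sigma> y x)"
      using assms by (subst ennreal_mult'[symmetric]) (auto intro!: ennreal_leI kernel_swap)
  qed
  also have "\<dots> = ennreal (1 + \<sigma>) * (\<integral>\<^sup>+ x. ennreal (S_kernel \<sigma> y x) \<partial>lborel)"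
  proof (rule nn_integral_cmult)
    show "(\<lambda>x. ennreal (S_kernel \<sigma> y x)) \<in> borel_measurable lborel"
      using measurable_Pair2[OF S_kernel_meas[of \<sigma>], of y] by simp
  qed
  also have "\<dots> \<le> ennreal (1 + \<sigma>) * (ennreal (4^DIM('a) * (1 + \<sigma> + \<sigma>^2)) * emeasure lborel (ball (0::'a) 1))"
    by (intro mult_left_mono row_bound assms) auto
  also have "\<dots> = ennreal ((1 + \<sigma>) * (4^DIM('a) * (1 + \<sigma> + \<sigma>^2))) * emeasure lborel (ball (0::'a) 1)"
    using assms by (simp add: ennreal_mult' mult.assoc)
  finally show ?thesis .
qed



lemma holder_nn:
  fixes N :: "'b measure" and k g :: "'b \<Rightarrow> real" and p A :: real
  assumes km: "k \<in> borel_measurable N" and gm: "g \<in> borel_measurable N"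
    and k0: "\<And>x. 0 \<le> k x" and g0: "\<And>x. 0 \<le> g x" and p: "p > 1" and A: "A > 0"
    and kA: "(\<integral>\<^sup>+ x. ennreal (k x) \<partial>N) \<le> ennreal A"
    and Jfin: "(\<integral>\<^sup>+ x. ennreal (k x * g x powr p) \<partial>N) < \<infinity>"
  shows "(\<integral>\<^sup>+ x. ennreal (k x * g x) \<partial>N) < \<infinity> \<and>
         enn2real (\<integral>\<^sup>+ x. ennreal (k x * g x) \<partial>N) powr p
           \<le> A powr (p - 1) * enn2real (\<integral>\<^sup>+ x. ennreal (k x * g x powr p) \<partial>N)"
proof -
  define Je where "Je = (\<integral>\<^sup>+ x. ennreal (k x * g x powr p) \<partial>N)"
  define J where "J = enn2real Je"
  define Ie where "Ie = (\<integral>\<^sup>+ x. ennreal (k x * g x) \<partial>N)"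
  have JeJ: "Je = ennreal J" using Jfin unfolding J_def Je_def by (simp add: ennreal_enn2real_if)
  have J0: "J \<ge> 0" unfolding J_def by simp
  define q where "q = p / (p - 1)"
  have q1: "q > 1" using p unfolding q_def by (simp add: field_simps)
  have pq: "1/p + 1/q = 1" using p unfolding q_def by (simp add: field_simps)
  have pq2: "p / q = p - 1" using p unfolding q_def by (simp add: field_simps)
  show ?thesis
  proof (cases "J = 0")
    case True
    then have "Je = 0" using JeJ by simp
    then have "AE x in N. ennreal (k x * g x powr p) = 0"
      unfolding Je_def using km gm by (subst (asm) nn_integral_0_iff_AE) auto
    then have "AE x in N. ennreal (k x * g x) = 0"
    proof (rule eventually_mono)
      fix x assume "ennreal (k x * g x powr p) = 0"
      then have "k x * g x powr p \<le> 0" by (metis ennreal_eq_0_iff)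
      moreover have "0 \<le> k x * g x powr p" using k0[of x] by simp
      ultimately have "k x * g x powr p = 0" by linarith
      then have "k x = 0 \<or> g x = 0" using p by auto
      then show "ennreal (k x * g x) = 0" by auto
    qed
    then have "Ie = 0" unfolding Ie_def using nn_integral_cong_AE by fastforce
    then show ?thesis unfolding Ie_def[symmetric] Je_def[symmetric] J_def[symmetric] using p True by simp
  next
    case False
    then have Jp: "J > 0" using J0 by simp
    define \<alpha> where "\<alpha> = J powr (1/p)"
    define \<beta> where "\<beta> = A powr (1/q)"
    have \<alpha>p: "\<alpha> > 0" and \<beta>p: "\<beta> > 0" using Jp A unfolding \<alpha>_def \<beta>_def by auto
    have \<alpha>P: "\<alpha> powr p = J" unfolding \<alpha>_def using Jp p by (simp add: powr_powr)
    have \<beta>Q: "\<beta> powr q = A" unfolding \<beta>_def using A q1 by (simp add: powr_powr)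
    have pw: "k x * g x \<le> (\<alpha> * \<beta> / (p * J)) * (k x * g x powr p) + (\<alpha> * \<beta> / (q * A)) * k x" for x
    proof -
      have "(g x / \<alpha>) * (1 / \<beta>) \<le> (g x / \<alpha>) powr p / p + (1 / \<beta>) powr q / q"
        using Youngs_inequality[OF p q1 pq, of "g x / \<alpha>" "1 / \<beta>"] g0[of x] \<alpha>p \<beta>p by simp
      also have "(g x / \<alpha>) powr p = g x powr p / J"
        using g0[of x] \<alpha>p by (simp add: powr_divide \<alpha>P)
      also have "(1 / \<beta>) powr q = 1 / A"
        using \<beta>p by (simp add: powr_divide \<beta>Q)
      finally have "(g x / \<alpha>) * (1 / \<beta>) \<le> g x powr p / J / p + 1 / A / q" .
      then have "\<alpha> * \<beta> * ((g x / \<alpha>) * (1 / \<beta>)) \<le> \<alpha> * \<beta> * (g x powr p / J / p + 1 / A / q)"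
        using \<alpha>p \<beta>p by (intro mult_left_mono) auto
      then have "g x \<le> \<alpha> * \<beta> * (g x powr p / J / p + 1 / A / q)"
        using \<alpha>p \<beta>p by (simp add: field_simps)
      then have "k x * g x \<le> k x * (\<alpha> * \<beta> * (g x powr p / J / p + 1 / A / q))"
        using k0[of x] by (intro mult_left_mono) auto
      then show ?thesis by (simp add: field_simps)
    qed
    have c1: "\<alpha> * \<beta> / (p * J) \<ge> 0" and c2: "\<alpha> * \<beta> / (q * A) \<ge> 0"
      using \<alpha>p \<beta>p Jp A p q1 by auto
    have "Ie \<le> (\<integral>\<^sup>+ x. ennreal (\<alpha> * \<beta> / (p * J)) * ennreal (k x * g x powr p) + ennreal (\<alpha> * \<beta> / (q * A)) * ennreal (k x) \<partial>N)"
      unfolding Ie_def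
    proof (rule nn_integral_mono)
      fix x
      have "0 \<le> k x * g x powr p" using k0[of x] by simp
      then have n1: "0 \<le> \<alpha> * \<beta> / (p * J) * (k x * g x powr p)" using c1 by (rule mult_nonneg_nonneg[rotated])
      have n2: "0 \<le> \<alpha> * \<beta> / (q * A) * k x" using c2 k0[of x] by (rule mult_nonneg_nonneg)
      have "ennreal (k x * g x) \<le> ennreal (\<alpha> * \<beta> / (p * J) * (k x * g x powr p) + \<alpha> * \<beta> / (q * A) * k x)"
        by (rule ennreal_leI) (rule pw)
      also have "\<dots> = ennreal (\<alpha> * \<beta> / (p * J) * (k x * g x powr p)) + ennreal (\<alpha> * \<beta> / (q * A) * k x)"
        by (rule ennreal_plus[OF n1 n2])
      also have "\<dots> = ennreal (\<alpha> * \<beta> / (p * J)) * ennreal (k x * g x powr p) + ennreal (\<alpha> * \<beta> / (q * A)) * ennreal (k x)"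
        using c1 c2 by (simp only: ennreal_mult')
      finally show "ennreal (k x * g x) \<le> ennreal (\<alpha> * \<beta> / (p * J)) * ennreal (k x * g x powr p) + ennreal (\<alpha> * \<beta> / (q * A)) * ennreal (k x)" .
    qed
    also have "\<dots> = ennreal (\<alpha> * \<beta> / (p * J)) * Je + ennreal (\<alpha> * \<beta> / (q * A)) * (\<integral>\<^sup>+ x. ennreal (k x) \<partial>N)"
      unfolding Je_def using km gm
      by (subst nn_integral_add) (auto simp: nn_integral_cmult)
    also have "\<dots> \<le> ennreal (\<alpha> * \<beta> / (p * J)) * ennreal J + ennreal (\<alpha> * \<beta> / (q * A)) * ennreal A"
      using kA JeJ by (intro add_mono mult_left_mono) auto
    also have "\<dots> = ennreal (\<alpha> * \<beta> / (p * J) * J + \<alpha> * \<beta> / (q * A) * A)"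
      using c1 c2 Jp A \<alpha>p \<beta>p p q1 by (simp add: ennreal_mult'[symmetric] ennreal_plus[symmetric] del: ennreal_plus)
    also have "\<alpha> * \<beta> / (p * J) * J + \<alpha> * \<beta> / (q * A) * A = \<alpha> * \<beta> * (1/p + 1/q)"
      using Jp A by (simp add: field_simps)
    also have "\<dots> = \<alpha> * \<beta>" using pq by simp
    finally have Ile: "Ie \<le> ennreal (\<alpha> * \<beta>)" .
    then have Ifin: "Ie < \<infinity>" by (simp add: le_less_trans)
    have "enn2real Ie \<le> \<alpha> * \<beta>" using Ile \<alpha>p \<beta>p by (simp add: enn2real_leI)
    then have "enn2real Ie powr p \<le> (\<alpha> * \<beta>) powr p"
      using p by (intro powr_mono2) auto
    also have "(\<alpha> * \<beta>) powr p = J * A powr (p - 1)"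
      using \<alpha>p \<beta>p A by (simp add: powr_mult \<alpha>P \<beta>_def powr_powr pq2)
    finally show ?thesis using Ifin unfolding Ie_def[symmetric] Je_def[symmetric] J_def[symmetric]
      by (simp add: mult.commute)
  qed
qed



lemma kernel_bounds:
  assumes "\<sigma> > 0"
  shows "\<exists>A>0. (\<forall>x::'a::euclidean_space. (\<integral>\<^sup>+ y. ennreal (S_kernel \<sigma> x y) \<partial>lborel) \<le> ennreal A) \<and>
               (\<forall>y::'a. (\<integral>\<^sup>+ x. ennreal (S_kernel \<sigma> x y) \<partial>lborel) \<le> ennreal A)"
proof -
  define V where "V = emeasure lborel (ball (0::'a) 1)"
  have Vfin: "V = ennreal (enn2real V)" unfolding V_def
    using emeasure_lborel_ball_finite[of "0::'a" 1] by (simp add: ennreal_enn2real_if)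
  define c0 where "c0 = 4^DIM('a) * (1 + \<sigma> + \<sigma>^2) * enn2real V"
  have c0: "c0 \<ge> 0" unfolding c0_def using assms by (auto intro!: mult_nonneg_nonneg add_nonneg_nonneg)
  define A where "A = (1 + \<sigma>) * c0 + 1"
  have s0: "0 \<le> \<sigma> * c0" using c0 assms by simp
  have Ap: "A > 0" unfolding A_def using c0 s0 by (simp add: distrib_right)
  have "(\<integral>\<^sup>+ y. ennreal (S_kernel \<sigma> x y) \<partial>lborel) \<le> ennreal A" for x :: 'a
  proof -
    have "(\<integral>\<^sup>+ y. ennreal (S_kernel \<sigma> x y) \<partial>lborel) \<le> ennreal (4^DIM('a) * (1 + \<sigma> + \<sigma>^2)) * V"
      unfolding V_def by (rule row_bound[OF assms])
    also have "\<dots> = ennreal c0" unfolding c0_def using assms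
      by (subst Vfin) (simp add: ennreal_mult'[symmetric] mult.assoc)
    also have "\<dots> \<le> ennreal A" unfolding A_def using c0 s0
      by (intro ennreal_leI) (simp add: distrib_right)
    finally show ?thesis .
  qed
  moreover have "(\<integral>\<^sup>+ x. ennreal (S_kernel \<sigma> x y) \<partial>lborel) \<le> ennreal A" for y :: 'a
  proof -
    have "(\<integral>\<^sup>+ x. ennreal (S_kernel \<sigma> x y) \<partial>lborel) \<le> ennreal ((1 + \<sigma>) * (4^DIM('a) * (1 + \<sigma> + \<sigma>^2))) * V"
      unfolding V_def by (rule col_bound[OF assms])
    also have "\<dots> = ennreal ((1 + \<sigma>) * c0)" unfolding c0_def using assms
      by (subst Vfin) (simp add: ennreal_mult'[symmetric] mult.assoc)
    also have "\<dots> \<le> ennreal A" unfolding A_def by (intro ennreal_leI) simp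
    finally show ?thesis .
  qed
  ultimately show ?thesis using Ap by blast
qed

lemma S_op_meas:
  assumes f: "f \<in> borel_measurable (lborel :: 'a::euclidean_space measure)"
  shows "S_op \<sigma> f \<in> borel_measurable (lborel :: 'a measure)"
proof -
  have "(\<lambda>(x, y). S_kernel \<sigma> x y * f y) \<in> borel_measurable (lborel \<Otimes>\<^sub>M (lborel :: 'a measure))"
    using S_kernel_meas[of \<sigma>] f by measurable
  then show ?thesis unfolding S_op_def[abs_def]
    by (intro lborel.borel_measurable_lebesgue_integral) simp
qed

lemma not_AE_False: "\<not> (AE x in (lborel :: 'a::euclidean_space measure). False)"
  using ae_filter_eq_bot_iff[of "lborel :: 'a measure"] trivial_limit_def by auto

lemma Linf_weighted:
  fixes w :: "'a::euclidean_space \<Rightarrow> real"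
  assumes \<sigma>: "\<sigma> > 0" and wm: "w \<in> borel_measurable lborel" and wp: "\<And>x. w x > 0"
  shows "S_bounded_Linf (density lborel (\<lambda>x. ennreal (w x))) \<sigma>"
  unfolding S_bounded_Linf_def
proof -
  obtain A where A: "A > 0" and row: "\<And>x::'a. (\<integral>\<^sup>+ y. ennreal (S_kernel \<sigma> x y) \<partial>lborel) \<le> ennreal A"
    using kernel_bounds[OF \<sigma>] by blast
  show "\<exists>C\<ge>0. \<forall>f\<in>borel_measurable (density lborel (\<lambda>x. ennreal (w x))). \<forall>B.
          (AE x in density lborel (\<lambda>x. ennreal (w x)). \<bar>f x\<bar> \<le> B) \<longrightarrow>
          (AE x in density lborel (\<lambda>x. ennreal (w x)). integrable lborel (\<lambda>y. S_kernel \<sigma> x y * f y)) \<and>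
          S_op \<sigma> f \<in> borel_measurable (density lborel (\<lambda>x. ennreal (w x))) \<and>
          (AE x in density lborel (\<lambda>x. ennreal (w x)). \<bar>S_op \<sigma> f x\<bar> \<le> C * B)"
  proof (rule exI[of _ A], intro conjI ballI allI impI)
    show "0 \<le> A" using A by simp
    fix f :: "'a \<Rightarrow> real" and B
    assume fm: "f \<in> borel_measurable (density lborel (\<lambda>x. ennreal (w x)))"
    then have fm': "f \<in> borel_measurable lborel" by simp
    assume "AE x in density lborel (\<lambda>x. ennreal (w x)). \<bar>f x\<bar> \<le> B"
    then have aeB: "AE x in lborel. \<bar>f x\<bar> \<le> B"
      using wm wp by (subst (asm) AE_density) auto
    have B0: "B \<ge> 0"
    proof (rule ccontr)
      assume "\<not> B \<ge> 0"
      then have "AE x in (lborel :: 'a measure). False" using aeB by (auto elim: eventually_mono)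
      then show False using not_AE_False by blast
    qed
    have bnd: "(\<integral>\<^sup>+ y. ennreal (norm (S_kernel \<sigma> x y * f y)) \<partial>lborel) \<le> ennreal (A * B)" for x
    proof -
      have "(\<integral>\<^sup>+ y. ennreal (norm (S_kernel \<sigma> x y * f y)) \<partial>lborel) \<le> (\<integral>\<^sup>+ y. ennreal B * ennreal (S_kernel \<sigma> x y) \<partial>lborel)"
      proof (rule nn_integral_mono_AE)
        show "AE y in lborel. ennreal (norm (S_kernel \<sigma> x y * f y)) \<le> ennreal B * ennreal (S_kernel \<sigma> x y)"
          using aeB
        proof (rule eventually_mono)
          fix y assume "\<bar>f y\<bar> \<le> B"
          then have "norm (S_kernel \<sigma> x y * f y) \<le> B * S_kernel \<sigma> x y"
            using S_kernel_nonneg[of \<sigma> x y] mult_right_mono[of "\<bar>f y\<bar>" B "S_kernel \<sigma> x y"]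
            by (simp add: abs_mult mult.commute)
          then show "ennreal (norm (S_kernel \<sigma> x y * f y)) \<le> ennreal B * ennreal (S_kernel \<sigma> x y)"
            using B0 by (simp add: ennreal_mult'[symmetric] ennreal_leI)
        qed
      qed
      also have "\<dots> = ennreal B * (\<integral>\<^sup>+ y. ennreal (S_kernel \<sigma> x y) \<partial>lborel)"
        using measurable_Pair2[OF S_kernel_meas[of \<sigma>], of x] by (intro nn_integral_cmult) simp
      also have "\<dots> \<le> ennreal B * ennreal A" by (intro mult_left_mono row) auto
      also have "\<dots> = ennreal (A * B)" using B0 A by (simp add: ennreal_mult mult.commute)
      finally show ?thesis .
    qed
    have intg: "integrable lborel (\<lambda>y. S_kernel \<sigma> x y * f y)" for x
    proof (rule integrableI_bounded)
      show "(\<lambda>y. S_kernel \<sigma> x y * f y) \<in> borel_measurable lborel"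
        using measurable_Pair2[OF S_kernel_meas[of \<sigma>], of x] fm' by measurable
      show "(\<integral>\<^sup>+ y. ennreal (norm (S_kernel \<sigma> x y * f y)) \<partial>lborel) < \<infinity>"
        using bnd[of x] by (simp add: le_less_trans)
    qed
    show "AE x in density lborel (\<lambda>x. ennreal (w x)). integrable lborel (\<lambda>y. S_kernel \<sigma> x y * f y)"
      using intg by simp
    show "S_op \<sigma> f \<in> borel_measurable (density lborel (\<lambda>x. ennreal (w x)))"
      using S_op_meas[OF fm'] by simp
    have "\<bar>S_op \<sigma> f x\<bar> \<le> A * B" for x
    proof -
      have "ennreal (norm (S_op \<sigma> f x)) \<le> (\<integral>\<^sup>+ y. ennreal (norm (S_kernel \<sigma> x y * f y)) \<partial>lborel)"
        unfolding S_op_def by (rule integral_norm_bound_ennreal[OF intg])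
      also have "\<dots> \<le> ennreal (A * B)" by (rule bnd)
      finally show ?thesis using A B0 by simp
    qed
    then show "AE x in density lborel (\<lambda>x. ennreal (w x)). \<bar>S_op \<sigma> f x\<bar> \<le> A * B" by simp
  qed
qed



lemma pointwise_Sop:
  fixes f :: "'a::euclidean_space \<Rightarrow> real"
  assumes \<sigma>: "\<sigma> > 0" and fm: "f \<in> borel_measurable lborel" and p: "1 \<le> p" and A: "A > 0"
    and row: "(\<integral>\<^sup>+ y. ennreal (S_kernel \<sigma> x y) \<partial>lborel) \<le> ennreal A"
    and Jfin: "(\<integral>\<^sup>+ y. ennreal (S_kernel \<sigma> x y * \<bar>f y\<bar> powr p) \<partial>lborel) < \<infinity>"
  shows "integrable lborel (\<lambda>y. S_kernel \<sigma> x y * f y) \<and>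
    \<bar>S_op \<sigma> f x\<bar> powr p \<le> A powr (p - 1) * enn2real (\<integral>\<^sup>+ y. ennreal (S_kernel \<sigma> x y * \<bar>f y\<bar> powr p) \<partial>lborel)"
proof -
  have km: "(\<lambda>y. S_kernel \<sigma> x y) \<in> borel_measurable lborel"
    using measurable_Pair2[OF S_kernel_meas[of \<sigma>], of x] by simp
  have meas: "(\<lambda>y. S_kernel \<sigma> x y * f y) \<in> borel_measurable lborel"
    using km fm by measurable
  have nrm: "ennreal (norm (S_kernel \<sigma> x y * f y)) = ennreal (S_kernel \<sigma> x y * \<bar>f y\<bar>)" for y
    using S_kernel_nonneg[of \<sigma> x y] by (simp add: abs_mult)
  define Ie where "Ie = (\<integral>\<^sup>+ y. ennreal (S_kernel \<sigma> x y * \<bar>f y\<bar>) \<partial>lborel)"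
  define J where "J = enn2real (\<integral>\<^sup>+ y. ennreal (S_kernel \<sigma> x y * \<bar>f y\<bar> powr p) \<partial>lborel)"
  have key: "Ie < \<infinity> \<and> enn2real Ie powr p \<le> A powr (p - 1) * J"
  proof (cases "p = 1")
    case True
    have "Ie = (\<integral>\<^sup>+ y. ennreal (S_kernel \<sigma> x y * \<bar>f y\<bar> powr p) \<partial>lborel)"
      unfolding Ie_def True by simp
    then have "Ie < \<infinity>" and "enn2real Ie = J" using Jfin unfolding J_def by auto
    moreover have "enn2real Ie powr p = enn2real Ie" using True by simp
    moreover have "A powr (p - 1) = 1" using True A by simp
    ultimately show ?thesis by simp
  next
    case False
    then have p1: "p > 1" using p by simp
    show ?thesis unfolding Ie_def J_def
      by (rule holder_nn[OF km _ S_kernel_nonneg _ p1 A row Jfin]) (use fm in auto)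
  qed
  have int: "integrable lborel (\<lambda>y. S_kernel \<sigma> x y * f y)"
  proof (rule integrableI_bounded[OF meas])
    show "(\<integral>\<^sup>+ y. ennreal (norm (S_kernel \<sigma> x y * f y)) \<partial>lborel) < \<infinity>"
      unfolding nrm using key unfolding Ie_def by simp
  qed
  have "ennreal (norm (S_op \<sigma> f x)) \<le> (\<integral>\<^sup>+ y. ennreal (norm (S_kernel \<sigma> x y * f y)) \<partial>lborel)"
    unfolding S_op_def by (rule integral_norm_bound_ennreal[OF int])
  also have "\<dots> = Ie" unfolding nrm Ie_def ..
  finally have "ennreal \<bar>S_op \<sigma> f x\<bar> \<le> Ie" by simp
  then have "\<bar>S_op \<sigma> f x\<bar> \<le> enn2real Ie"
  proof -
    have "enn2real (ennreal \<bar>S_op \<sigma> f x\<bar>) \<le> enn2real Ie"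
      by (rule enn2real_mono) (use key \<open>ennreal \<bar>S_op \<sigma> f x\<bar> \<le> Ie\<close> in auto)
    then show ?thesis by simp
  qed
  then have "\<bar>S_op \<sigma> f x\<bar> powr p \<le> enn2real Ie powr p"
    using p by (intro powr_mono2) auto
  also have "\<dots> \<le> A powr (p - 1) * J" using key by blast
  finally show ?thesis using int unfolding J_def by blast
qed

lemma Lp_weighted:
  fixes w :: "'a::euclidean_space \<Rightarrow> real"
  assumes \<sigma>: "\<sigma> > 0" and wm: "w \<in> borel_measurable lborel" and wp: "\<And>x. w x > 0"
    and c: "c \<ge> 0" and wc: "\<And>x y. (x, y) \<in> local_region \<sigma> \<Longrightarrow> w x \<le> c * w y"
    and p: "1 \<le> p"
  shows "S_bounded_Lp (density lborel (\<lambda>x. ennreal (w x))) p \<sigma>"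
  unfolding S_bounded_Lp_def
proof -
  obtain A where A: "A > 0" and row: "\<And>x::'a. (\<integral>\<^sup>+ y. ennreal (S_kernel \<sigma> x y) \<partial>lborel) \<le> ennreal A"
    and col: "\<And>y::'a. (\<integral>\<^sup>+ x. ennreal (S_kernel \<sigma> x y) \<partial>lborel) \<le> ennreal A"
    using kernel_bounds[OF \<sigma>] by blast
  define M where "M = density lborel (\<lambda>x. ennreal (w x))"
  define C where "C = A powr (p - 1) * (c * A)"
  have C0: "C \<ge> 0" unfolding C_def using A c by simp
  have wme[measurable]: "(\<lambda>x. ennreal (w x)) \<in> borel_measurable lborel" using wm by simp
  show "\<exists>C\<ge>0. \<forall>f\<in>borel_measurable (density lborel (\<lambda>x. ennreal (w x))).
     (\<integral>\<^sup>+ x. ennreal (\<bar>f x\<bar> powr p) \<partial>density lborel (\<lambda>x. ennreal (w x))) < \<infinity> \<longrightarrow>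
       (AE x in density lborel (\<lambda>x. ennreal (w x)). integrable lborel (\<lambda>y. S_kernel \<sigma> x y * f y)) \<and>
       S_op \<sigma> f \<in> borel_measurable (density lborel (\<lambda>x. ennreal (w x))) \<and>
       (\<integral>\<^sup>+ x. ennreal (\<bar>S_op \<sigma> f x\<bar> powr p) \<partial>density lborel (\<lambda>x. ennreal (w x)))
          \<le> ennreal C * (\<integral>\<^sup>+ x. ennreal (\<bar>f x\<bar> powr p) \<partial>density lborel (\<lambda>x. ennreal (w x)))"
    unfolding M_def[symmetric]
  proof (rule exI[of _ C], intro conjI ballI impI)
    show "0 \<le> C" by (rule C0)
    fix f :: "'a \<Rightarrow> real"
    assume fm0: "f \<in> borel_measurable M"
    then have fm[measurable]: "f \<in> borel_measurable lborel" unfolding M_def by simp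
    define G where "G = (\<integral>\<^sup>+ x. ennreal (\<bar>f x\<bar> powr p) \<partial>M)"
    assume Gfin: "(\<integral>\<^sup>+ x. ennreal (\<bar>f x\<bar> powr p) \<partial>M) < \<infinity>"
    have Gd: "G = (\<integral>\<^sup>+ x. ennreal (w x) * ennreal (\<bar>f x\<bar> powr p) \<partial>lborel)"
      unfolding G_def M_def by (rule nn_integral_density) auto
    define J where "J x = (\<integral>\<^sup>+ y. ennreal (S_kernel \<sigma> x y * \<bar>f y\<bar> powr p) \<partial>lborel)" for x
    have pm[measurable]: "(\<lambda>(x, y). ennreal (S_kernel \<sigma> x y * \<bar>f y\<bar> powr p)) \<in> borel_measurable (lborel \<Otimes>\<^sub>M (lborel :: 'a measure))"
      using S_kernel_meas[of \<sigma>] by measurable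
    have Jm: "J \<in> borel_measurable lborel"
      unfolding J_def[abs_def] using pm by (intro lborel.borel_measurable_nn_integral) simp
    have inner: "(\<integral>\<^sup>+ x. ennreal (w x) * ennreal (S_kernel \<sigma> x y) \<partial>lborel) \<le> ennreal (c * A) * ennreal (w y)" for y
    proof -
      have "(\<integral>\<^sup>+ x. ennreal (w x) * ennreal (S_kernel \<sigma> x y) \<partial>lborel)
          \<le> (\<integral>\<^sup>+ x. ennreal (c * w y) * ennreal (S_kernel \<sigma> x y) \<partial>lborel)"
      proof (rule nn_integral_mono)
        fix x
        show "ennreal (w x) * ennreal (S_kernel \<sigma> x y) \<le> ennreal (c * w y) * ennreal (S_kernel \<sigma> x y)"
        proof (cases "(x, y) \<in> local_region \<sigma>")
          case True
          then show ?thesis using wc[OF True] by (intro mult_right_mono ennreal_leI) auto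
        next
          case False
          then show ?thesis by (simp add: S_kernel_def)
        qed
      qed
      also have "\<dots> = ennreal (c * w y) * (\<integral>\<^sup>+ x. ennreal (S_kernel \<sigma> x y) \<partial>lborel)"
        using measurable_Pair1[OF S_kernel_meas[of \<sigma>], of y] by (intro nn_integral_cmult) simp
      also have "\<dots> \<le> ennreal (c * w y) * ennreal A" by (intro mult_left_mono col) auto
      also have "\<dots> = ennreal (c * A) * ennreal (w y)"
        using c A wp[of y] by (simp add: ennreal_mult'[symmetric] mult_ac)
      finally show ?thesis .
    qed
    have T: "(\<integral>\<^sup>+ x. J x \<partial>M) \<le> ennreal (c * A) * G"
    proof -
      have "(\<integral>\<^sup>+ x. J x \<partial>M) = (\<integral>\<^sup>+ x. ennreal (w x) * J x \<partial>lborel)"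
        unfolding M_def using Jm by (intro nn_integral_density) auto
      also have "\<dots> = (\<integral>\<^sup>+ x. (\<integral>\<^sup>+ y. ennreal (w x) * ennreal (S_kernel \<sigma> x y * \<bar>f y\<bar> powr p) \<partial>lborel) \<partial>lborel)"
      proof (rule nn_integral_cong)
        fix x
        show "ennreal (w x) * J x = (\<integral>\<^sup>+ y. ennreal (w x) * ennreal (S_kernel \<sigma> x y * \<bar>f y\<bar> powr p) \<partial>lborel)"
          unfolding J_def using measurable_Pair2[OF pm, of x]
          by (intro nn_integral_cmult[symmetric]) simp
      qed
      also have "\<dots> = (\<integral>\<^sup>+ y. (\<integral>\<^sup>+ x. ennreal (w x) * ennreal (S_kernel \<sigma> x y * \<bar>f y\<bar> powr p) \<partial>lborel) \<partial>lborel)"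
        by (rule lborel_pair.Fubini'[symmetric]) (use S_kernel_meas[of \<sigma>] in measurable)
      also have "\<dots> = (\<integral>\<^sup>+ y. ennreal (\<bar>f y\<bar> powr p) * (\<integral>\<^sup>+ x. ennreal (w x) * ennreal (S_kernel \<sigma> x y) \<partial>lborel) \<partial>lborel)"
      proof (rule nn_integral_cong)
        fix y
        have "(\<integral>\<^sup>+ x. ennreal (w x) * ennreal (S_kernel \<sigma> x y * \<bar>f y\<bar> powr p) \<partial>lborel)
            = (\<integral>\<^sup>+ x. ennreal (\<bar>f y\<bar> powr p) * (ennreal (w x) * ennreal (S_kernel \<sigma> x y)) \<partial>lborel)"
          by (intro nn_integral_cong, subst ennreal_mult'[OF S_kernel_nonneg]) (simp only: mult_ac)
        also have "\<dots> = ennreal (\<bar>f y\<bar> powr p) * (\<integral>\<^sup>+ x. ennreal (w x) * ennreal (S_kernel \<sigma> x y) \<partial>lborel)"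
          using measurable_Pair1[OF S_kernel_meas[of \<sigma>], of y] by (intro nn_integral_cmult) simp
        finally show "(\<integral>\<^sup>+ x. ennreal (w x) * ennreal (S_kernel \<sigma> x y * \<bar>f y\<bar> powr p) \<partial>lborel)
            = ennreal (\<bar>f y\<bar> powr p) * (\<integral>\<^sup>+ x. ennreal (w x) * ennreal (S_kernel \<sigma> x y) \<partial>lborel)" .
      qed
      also have "\<dots> \<le> (\<integral>\<^sup>+ y. ennreal (\<bar>f y\<bar> powr p) * (ennreal (c * A) * ennreal (w y)) \<partial>lborel)"
        by (intro nn_integral_mono mult_left_mono inner) auto
      also have "\<dots> = (\<integral>\<^sup>+ y. ennreal (c * A) * (ennreal (w y) * ennreal (\<bar>f y\<bar> powr p)) \<partial>lborel)"
        by (simp only: mult_ac)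
      also have "\<dots> = ennreal (c * A) * G"
        unfolding Gd by (intro nn_integral_cmult) simp
      finally show ?thesis .
    qed
    have JMfin: "(\<integral>\<^sup>+ x. J x \<partial>M) \<noteq> \<infinity>"
    proof -
      have "ennreal (c * A) * G < \<infinity>" using Gfin unfolding G_def[symmetric]
        by (simp add: ennreal_mult_less_top)
      from le_less_trans[OF T this] show ?thesis by simp
    qed
    have AEJ: "AE x in M. J x \<noteq> \<infinity>"
      by (rule nn_integral_PInf_AE[OF _ JMfin]) (use Jm in \<open>simp add: M_def\<close>)
    have P: "J x < \<infinity> \<Longrightarrow> integrable lborel (\<lambda>y. S_kernel \<sigma> x y * f y) \<and>
        \<bar>S_op \<sigma> f x\<bar> powr p \<le> A powr (p - 1) * enn2real (J x)" for x
      unfolding J_def by (rule pointwise_Sop[OF \<sigma> fm p A row])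
    show "AE x in M. integrable lborel (\<lambda>y. S_kernel \<sigma> x y * f y)"
    proof (rule eventually_mono[OF AEJ])
      fix x assume "J x \<noteq> \<infinity>"
      then have "J x < \<infinity>" by (simp add: less_top)
      then show "integrable lborel (\<lambda>y. S_kernel \<sigma> x y * f y)" using P by blast
    qed
    show "S_op \<sigma> f \<in> borel_measurable M"
      using S_op_meas[OF fm] unfolding M_def by simp
    have pw: "ennreal (\<bar>S_op \<sigma> f x\<bar> powr p) \<le> ennreal (A powr (p - 1)) * J x" for x
    proof (cases "J x = \<infinity>")
      case True
      have "A powr (p - 1) > 0" using A by simp
      then show ?thesis using True by (simp add: ennreal_mult_top)
    next
      case False
      then have Jx: "J x < \<infinity>" by (simp add: top.not_eq_extremum)
      then have "ennreal (\<bar>S_op \<sigma> f x\<bar> powr p) \<le> ennreal (A powr (p - 1) * enn2real (J x))"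
        using P[OF Jx] by (intro ennreal_leI) blast
      also have "\<dots> = ennreal (A powr (p - 1)) * J x"
        using Jx by (simp add: ennreal_mult' ennreal_enn2real_if)
      finally show ?thesis .
    qed
    have "(\<integral>\<^sup>+ x. ennreal (\<bar>S_op \<sigma> f x\<bar> powr p) \<partial>M) \<le> (\<integral>\<^sup>+ x. ennreal (A powr (p - 1)) * J x \<partial>M)"
      by (intro nn_integral_mono pw)
    also have "\<dots> = ennreal (A powr (p - 1)) * (\<integral>\<^sup>+ x. J x \<partial>M)"
      using Jm unfolding M_def by (intro nn_integral_cmult) simp
    also have "\<dots> \<le> ennreal (A powr (p - 1)) * (ennreal (c * A) * G)"
      by (intro mult_left_mono T) auto
    also have "\<dots> = ennreal C * G"
      unfolding C_def by (simp only: ennreal_mult'[OF powr_ge_zero] mult.assoc)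
    finally show "(\<integral>\<^sup>+ x. ennreal (\<bar>S_op \<sigma> f x\<bar> powr p) \<partial>M) \<le> ennreal C * (\<integral>\<^sup>+ x. ennreal (\<bar>f x\<bar> powr p) \<partial>M)"
      unfolding G_def .
  qed
qed



lemma gauss_weight_ratio:
  fixes x y :: "'a::euclidean_space"
  assumes "(x, y) \<in> local_region \<sigma>"
  shows "pi powr (- real DIM('a) / 2) * exp (- (norm x)\<^sup>2) \<le> exp \<sigma> * (pi powr (- real DIM('a) / 2) * exp (- (norm y)\<^sup>2))"
proof -
  have "(norm y)\<^sup>2 - (norm x)\<^sup>2 = inner (y - x) (y + x)"
    by (simp add: power2_norm_eq_inner inner_diff_left inner_diff_right inner_add_left inner_add_right inner_commute)
  also have "\<dots> \<le> norm (y - x) * norm (y + x)" by (rule norm_cauchy_schwarz)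
  also have "\<dots> = norm (x - y) * norm (x + y)" by (simp add: norm_minus_commute add.commute)
  also have "\<dots> \<le> \<sigma>" using assms by (simp add: local_region_def)
  finally have "- (norm x)\<^sup>2 \<le> \<sigma> + - (norm y)\<^sup>2" by simp
  then have "exp (- (norm x)\<^sup>2) \<le> exp \<sigma> * exp (- (norm y)\<^sup>2)" by (simp add: exp_add[symmetric])
  then show ?thesis by (simp add: mult.left_commute[of "exp \<sigma>"])
qed

theorem lemma2p5:
  fixes \<sigma> :: real
  assumes "\<sigma> > 0"
  shows "(\<forall>p::real. 1 \<le> p \<longrightarrow>
            S_bounded_Lp (lborel :: 'a::euclidean_space measure) p \<sigma> \<and>
            S_bounded_Lp (gauss_measure :: 'a measure) p \<sigma>) \<and>
         S_bounded_Linf (lborel :: 'a measure) \<sigma> \<and>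
         S_bounded_Linf (gauss_measure :: 'a measure) \<sigma>"
proof -
  define w :: "'a \<Rightarrow> real" where "w = (\<lambda>x. pi powr (- real DIM('a) / 2) * exp (- (norm x)\<^sup>2))"
  have wm: "w \<in> borel_measurable lborel" unfolding w_def by measurable
  have wp: "\<And>x. w x > 0" unfolding w_def by simp
  have G: "gauss_measure = density lborel (\<lambda>x. ennreal (w x))"
    unfolding gauss_measure_def w_def ..
  have wc: "\<And>x y. (x, y) \<in> local_region \<sigma> \<Longrightarrow> w x \<le> exp \<sigma> * w y"
    unfolding w_def by (rule gauss_weight_ratio)
  have L: "(lborel :: 'a measure) = density lborel (\<lambda>x. ennreal ((\<lambda>_. 1) x))"
    by (simp add: density_1)
  have one_m: "(\<lambda>_. 1::real) \<in> borel_measurable (lborel :: 'a measure)" by simp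
  show ?thesis
  proof (intro conjI allI impI)
    fix p :: real assume p: "1 \<le> p"
    show "S_bounded_Lp (lborel :: 'a measure) p \<sigma>"
      by (subst L, rule Lp_weighted[where c=1, OF assms one_m _ _ _ p]) auto
    show "S_bounded_Lp (gauss_measure :: 'a measure) p \<sigma>"
      unfolding G by (rule Lp_weighted[OF assms wm wp _ wc p]) simp
  next
    show "S_bounded_Linf (lborel :: 'a measure) \<sigma>"
      by (subst L, rule Linf_weighted[OF assms one_m]) auto
    show "S_bounded_Linf (gauss_measure :: 'a measure) \<sigma>"
      unfolding G by (rule Linf_weighted[OF assms wm wp])
  qed
qed


end
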